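(* Let $(E,\delta)$ be a non-empty separable metric space, let $M\in\mathbb N$, $\varepsilon,L,D\in(0,\infty)$, let $(\Omega,\mathcal F,\mathbb P)$ be a probability space, for every $x\in E$ let $Y_{x,1},\dots,Y_{x,M}\colon\Omega\to[0,D]$ be independent random variables, assume $|Y_{x,m}-Y_{y,m}|\le L\delta(x,y)$ for all $x,y\in E$, $m\in\{1,\dots,M\}$, and let $Z_x=\frac1M\sum_{m=1}^MY_{x,m}$ for $x\in E$. Then (i) $\mathbb E[|Z_x|]\le D<\infty$ for all $x\in E$; (ii) $\Omega\ni\eta\mapsto\sup_{x\in E}|Z_x(\eta)-\mathbb E[Z_x]|\in[0,\infty]$ is $\mathcal F/\mathcal B([0,\infty])$-measurable; (iii) $$\mathbb P\bigl(\sup_{x\in E}|Z_x-\mathbb E[Z_x]|\ge\varepsilon\bigr)\le 2\,\mathcal C_{(E,\delta),\frac{\varepsilon}{4L}}\exp\Bigl(\frac{-\varepsilon^2M}{2D^2}\Bigr).$$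
   Context: Covering number: for a metric space $(E,\delta)$ and $r\in[0,\infty]$, $\mathcal C_{(E,\delta),r}=\inf(\{n\in\mathbb N_0\colon\exists A\subseteq E \text{ with } |A|\le n \text{ and } \forall x\in E\ \exists a\in A\colon\delta(a,x)\le r\}\cup\{\infty\})$. *)

theory Defs
  imports "HOL-Analysis.Analysis" "HOL-Probability.Probability"
begin

definition covering_number :: "'a set \<Rightarrow> ('a \<Rightarrow> 'a \<Rightarrow> real) \<Rightarrow> real \<Rightarrow> enat" where
  "covering_number E \<delta> r =
     Inf ({enat n | n. \<exists>A. A \<subseteq> E \<and> finite A \<and> card A \<le> n \<and> (\<forall>x\<in>E. \<exists>a\<in>A. \<delta> a x \<le> r)}
          \<union> {\<infinity>})"

end

theory Submission
  imports Defs
begin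

theorem lemma3p18:
  fixes E :: "'e set" and \<delta> :: "'e \<Rightarrow> 'e \<Rightarrow> real"
    and P :: "'w measure"
    and M :: nat and \<epsilon> L D :: real
    and Y :: "'e \<Rightarrow> nat \<Rightarrow> 'w \<Rightarrow> real"
    and Z :: "'e \<Rightarrow> 'w \<Rightarrow> real"
  assumes metric: "Metric_space E \<delta>"
    and nonempty: "E \<noteq> {}"
    and separable: "separable_space (Metric_space.mtopology E \<delta>)"
    and M_pos: "M \<ge> 1"
    and eps_pos: "\<epsilon> > 0" and L_pos: "L > 0" and D_pos: "D > 0"
    and prob: "prob_space P"
    and Y_meas: "\<And>x m. x \<in> E \<Longrightarrow> m \<in> {1..M} \<Longrightarrow> Y x m \<in> borel_measurable P"
    and Y_range: "\<And>x m \<eta>. x \<in> E \<Longrightarrow> m \<in> {1..M} \<Longrightarrow> \<eta> \<in> space P \<Longrightarrow>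
                    0 \<le> Y x m \<eta> \<and> Y x m \<eta> \<le> D"
    and Y_indep: "\<And>x. x \<in> E \<Longrightarrow> prob_space.indep_vars P (\<lambda>_. borel) (Y x) {1..M}"
    and Y_lip: "\<And>x y m \<eta>. x \<in> E \<Longrightarrow> y \<in> E \<Longrightarrow> m \<in> {1..M} \<Longrightarrow> \<eta> \<in> space P \<Longrightarrow>
                    \<bar>Y x m \<eta> - Y y m \<eta>\<bar> \<le> L * \<delta> x y"
    and Z_def: "\<And>x \<eta>. Z x \<eta> = (\<Sum>m = 1..M. Y x m \<eta>) / real M"
  shows "(\<forall>x\<in>E. integrable P (\<lambda>\<eta>. \<bar>Z x \<eta>\<bar>) \<and> (\<integral>\<eta>. \<bar>Z x \<eta>\<bar> \<partial>P) \<le> D)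
       \<and> (\<lambda>\<eta>. \<Squnion>x\<in>E. ennreal \<bar>Z x \<eta> - (\<integral>\<omega>. Z x \<omega> \<partial>P)\<bar>) \<in> borel_measurable P
       \<and> emeasure P {\<eta> \<in> space P. (\<Squnion>x\<in>E. ennreal \<bar>Z x \<eta> - (\<integral>\<omega>. Z x \<omega> \<partial>P)\<bar>) \<ge> ennreal \<epsilon>}
           \<le> 2 * ennreal_of_enat (covering_number E \<delta> (\<epsilon> / (4 * L)))
               * ennreal (exp (- (\<epsilon>\<^sup>2 * real M) / (2 * D\<^sup>2)))"
proof -
  interpret prob_space P by (rule prob)
  interpret MS: Metric_space E \<delta> by (rule metric)
  have Mpos: "real M > 0" using M_pos by simp
  have Zeq: "Z x = (\<lambda>\<eta>. (\<Sum>m = 1..M. Y x m \<eta>) / real M)" for x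
    using Z_def by auto
  have Zm: "Z x \<in> borel_measurable P" if "x \<in> E" for x
    unfolding Zeq using Y_meas[OF that] by measurable
  have Zr: "0 \<le> Z x \<eta> \<and> Z x \<eta> \<le> D" if "x \<in> E" "\<eta> \<in> space P" for x \<eta>
  proof -
    have "(\<Sum>m = 1..M. Y x m \<eta>) \<le> (\<Sum>m = 1..M. D)"
      by (rule sum_mono) (use Y_range that in auto)
    moreover have "(\<Sum>m = 1..M. Y x m \<eta>) \<ge> 0"
      by (rule sum_nonneg) (use Y_range that in auto)
    ultimately show ?thesis using Mpos unfolding Z_def by (simp add: field_simps)
  qed
  have Zi: "integrable P (Z x)" if "x \<in> E" for x
    by (rule integrable_const_bound[where B=D]) (use Zr[OF that] Zm[OF that] in auto)
  have Zai: "integrable P (\<lambda>\<eta>. \<bar>Z x \<eta>\<bar>)" if "x \<in> E" for x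
    using Zi[OF that] by auto
  have part1: "\<forall>x\<in>E. integrable P (\<lambda>\<eta>. \<bar>Z x \<eta>\<bar>) \<and> (\<integral>\<eta>. \<bar>Z x \<eta>\<bar> \<partial>P) \<le> D"
  proof (intro ballI conjI)
    fix x assume x: "x \<in> E"
    show "integrable P (\<lambda>\<eta>. \<bar>Z x \<eta>\<bar>)" using Zai[OF x] .
    have "(\<integral>\<eta>. \<bar>Z x \<eta>\<bar> \<partial>P) \<le> (\<integral>\<eta>. D \<partial>P)"
      by (rule integral_mono_AE) (use Zai[OF x] Zr[OF x] in auto)
    then show "(\<integral>\<eta>. \<bar>Z x \<eta>\<bar> \<partial>P) \<le> D" by (simp add: prob_space)
  qed
  define EZ where "EZ x = (\<integral>\<omega>. Z x \<omega> \<partial>P)" for x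
  define g where "g x \<eta> = \<bar>Z x \<eta> - EZ x\<bar>" for x \<eta>
  have Zlip: "\<bar>Z x \<eta> - Z y \<eta>\<bar> \<le> L * \<delta> x y" if "x \<in> E" "y \<in> E" "\<eta> \<in> space P" for x y \<eta>
  proof -
    have "\<bar>Z x \<eta> - Z y \<eta>\<bar> = \<bar>\<Sum>m = 1..M. Y x m \<eta> - Y y m \<eta>\<bar> / real M"
      unfolding Z_def sum_subtractf diff_divide_distrib[symmetric] abs_divide using Mpos by simp
    also have "\<dots> \<le> (\<Sum>m = 1..M. \<bar>Y x m \<eta> - Y y m \<eta>\<bar>) / real M"
      using Mpos by (intro divide_right_mono sum_abs) auto
    also have "\<dots> \<le> (\<Sum>m = 1..M. L * \<delta> x y) / real M"
      using Mpos by (intro divide_right_mono sum_mono Y_lip that) auto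
    also have "\<dots> = L * \<delta> x y" using Mpos by simp
    finally show ?thesis .
  qed
  have EZlip: "\<bar>EZ x - EZ y\<bar> \<le> L * \<delta> x y" if "x \<in> E" "y \<in> E" for x y
  proof -
    have "\<bar>EZ x - EZ y\<bar> = \<bar>\<integral>\<omega>. Z x \<omega> - Z y \<omega> \<partial>P\<bar>"
      unfolding EZ_def using Zi that by simp
    also have "\<dots> \<le> (\<integral>\<omega>. \<bar>Z x \<omega> - Z y \<omega>\<bar> \<partial>P)"
      by (rule integral_abs_bound)
    also have "\<dots> \<le> (\<integral>\<omega>. L * \<delta> x y \<partial>P)"
      by (rule integral_mono_AE) (use Zi that Zlip in auto)
    also have "\<dots> = L * \<delta> x y" by (simp add: prob_space)
    finally show ?thesis .
  qed
  have glip: "g x \<eta> \<le> g y \<eta> + 2 * L * \<delta> x y" if "x \<in> E" "y \<in> E" "\<eta> \<in> space P" for x y \<eta>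
    using Zlip[OF that] EZlip[OF that(1,2)] unfolding g_def by linarith
  have gm: "(\<lambda>\<eta>. ennreal (g x \<eta>)) \<in> borel_measurable P" if "x \<in> E" for x
    unfolding g_def using Zm[OF that] by measurable
  define F where "F \<eta> = (\<Squnion>x\<in>E. ennreal (g x \<eta>))" for \<eta>
  obtain C where C: "countable C" "C \<subseteq> E" "MS.mtopology closure_of C = E"
    using separable unfolding separable_space_def by auto
  have dense: "\<exists>c\<in>C. \<delta> x c < r" if "x \<in> E" "r > 0" for x r
    using C(3) that unfolding MS.metric_closure_of by auto
  have FC: "F \<eta> = (\<Squnion>x\<in>C. ennreal (g x \<eta>))" if \<eta>: "\<eta> \<in> space P" for \<eta>
  proof (rule antisym)
    show "F \<eta> \<le> (\<Squnion>x\<in>C. ennreal (g x \<eta>))"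
      unfolding F_def
    proof (rule SUP_least)
      fix x assume x: "x \<in> E"
      show "ennreal (g x \<eta>) \<le> (\<Squnion>x\<in>C. ennreal (g x \<eta>))"
      proof (rule ennreal_le_epsilon)
        fix e :: real assume e: "0 < e"
        obtain c where c: "c \<in> C" "\<delta> x c < e / (2 * L)"
          using dense[OF x, of "e / (2 * L)"] e L_pos by auto
        have cE: "c \<in> E" using c C by auto
        have "g x \<eta> \<le> g c \<eta> + 2 * L * \<delta> x c" using glip[OF x cE \<eta>] .
        also have "2 * L * \<delta> x c \<le> e" using c(2) L_pos by (simp add: field_simps)
        finally have "g x \<eta> \<le> g c \<eta> + e" by simp
        then have "ennreal (g x \<eta>) \<le> ennreal (g c \<eta>) + ennreal e"
          using e by (simp add: g_def ennreal_plus[symmetric] del: ennreal_plus)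
        also have "\<dots> \<le> (\<Squnion>x\<in>C. ennreal (g x \<eta>)) + ennreal e"
          using c(1) by (intro add_mono SUP_upper) auto
        finally show "ennreal (g x \<eta>) \<le> (\<Squnion>x\<in>C. ennreal (g x \<eta>)) + ennreal e" .
      qed
    qed
    show "(\<Squnion>x\<in>C. ennreal (g x \<eta>)) \<le> F \<eta>"
      unfolding F_def using C(2) by (intro SUP_subset_mono) auto
  qed
  have Fm: "F \<in> borel_measurable P"
  proof -
    have "(\<lambda>\<eta>. \<Squnion>x\<in>C. ennreal (g x \<eta>)) \<in> borel_measurable P"
      using C(1) gm C(2) by (intro borel_measurable_SUP) auto
    then show ?thesis using measurable_cong[where M=P and f=F and g="\<lambda>\<eta>. \<Squnion>x\<in>C. ennreal (g x \<eta>)" and M'=borel] FC by auto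
  qed
  have part2: "(\<lambda>\<eta>. \<Squnion>x\<in>E. ennreal \<bar>Z x \<eta> - (\<integral>\<omega>. Z x \<omega> \<partial>P)\<bar>) \<in> borel_measurable P"
    using Fm unfolding F_def g_def EZ_def .
  define c where "c = exp (- (\<epsilon>\<^sup>2 * real M) / (2 * D\<^sup>2))"
  have c_pos: "c > 0" unfolding c_def by simp
  have hoef: "emeasure P {\<eta>\<in>space P. \<epsilon>/2 \<le> g a \<eta>} \<le> ennreal (2 * c)" if a: "a \<in> E" for a
  proof -
    define \<mu> where "\<mu> = (\<Sum>i\<in>{1..M}. expectation (Y a i))"
    have Yi: "integrable P (Y a i)" if "i \<in> {1..M}" for i
      by (rule integrable_const_bound[where B=D]) (use Y_range[OF a that] Y_meas[OF a that] in auto)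
    interpret H: Hoeffding_ineq P "{1..M}" "Y a" "\<lambda>_. 0" "\<lambda>_. D" \<mu>
    proof unfold_locales
      show "finite {1..M}" by simp
      show "indep_vars (\<lambda>_. borel) (Y a) {1..M}" by (rule Y_indep[OF a])
      show "AE x in P. Y a i x \<in> {0..D}" if "i \<in> {1..M}" for i
        using Y_range[OF a that] by (auto intro!: AE_I2)
      show "\<mu> \<equiv> \<Sum>i = 1..M. expectation (Y a i)" unfolding \<mu>_def by simp
    qed
    have EZa: "EZ a = \<mu> / real M"
      unfolding EZ_def Zeq \<mu>_def using Yi by (simp add: integral_sum)
    have gEq: "g a \<eta> = \<bar>(\<Sum>i\<in>{1..M}. Y a i \<eta>) - \<mu>\<bar> / real M" for \<eta>
      unfolding g_def EZa Z_def diff_divide_distrib[symmetric] abs_divide using Mpos by simp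
    have seteq: "{\<eta>\<in>space P. \<epsilon>/2 \<le> g a \<eta>} = {\<eta>\<in>space P. \<bar>(\<Sum>i\<in>{1..M}. Y a i \<eta>) - \<mu>\<bar> \<ge> real M * \<epsilon> / 2}"
      unfolding gEq using Mpos by (auto simp: field_simps)
    have sumD: "(\<Sum>i\<in>{1..M}. (D - 0)\<^sup>2) = real M * D\<^sup>2" by simp
    have "prob {\<eta>\<in>space P. \<bar>(\<Sum>i\<in>{1..M}. Y a i \<eta>) - \<mu>\<bar> \<ge> real M * \<epsilon> / 2}
          \<le> 2 * exp (-2 * (real M * \<epsilon> / 2)\<^sup>2 / (\<Sum>i\<in>{1..M}. (D - 0)\<^sup>2))"
      by (rule H.Hoeffding_ineq_abs_ge) (use Mpos eps_pos D_pos in auto)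
    also have "-2 * (real M * \<epsilon> / 2)\<^sup>2 / (\<Sum>i\<in>{1..M}. (D - 0)\<^sup>2) = - (\<epsilon>\<^sup>2 * real M) / (2 * D\<^sup>2)"
      unfolding sumD using Mpos D_pos by (simp add: field_simps power2_eq_square)
    finally have "prob {\<eta>\<in>space P. \<epsilon>/2 \<le> g a \<eta>} \<le> 2 * c" unfolding seteq c_def .
    then show ?thesis unfolding emeasure_eq_measure by (rule ennreal_leI)
  qed
  have Fm': "{\<eta>\<in>space P. F \<eta> \<ge> ennreal \<epsilon>} \<in> sets P" using Fm by measurable
  have part3: "emeasure P {\<eta>\<in>space P. F \<eta> \<ge> ennreal \<epsilon>}
      \<le> 2 * ennreal_of_enat (covering_number E \<delta> (\<epsilon> / (4 * L))) * ennreal c"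
  proof (cases "covering_number E \<delta> (\<epsilon> / (4 * L))")
    case infinity
    then show ?thesis using c_pos by (simp add: ennreal_mult_top ennreal_top_mult)
  next
    case (enat n)
    define S where "S = {enat n | n. \<exists>A. A \<subseteq> E \<and> finite A \<and> card A \<le> n \<and> (\<forall>x\<in>E. \<exists>a\<in>A. \<delta> a x \<le> \<epsilon> / (4 * L))} \<union> {\<infinity>}"
    have infS: "\<infinity> \<in> S" unfolding S_def by simp
    have "Inf S \<in> S" unfolding Inf_enat_def using infS by (auto intro: LeastI)
    moreover have "Inf S = enat n" using enat unfolding covering_number_def S_def by simp
    ultimately have "enat n \<in> S" by simp
    then obtain A where A: "A \<subseteq> E" "finite A" "card A \<le> n" "\<forall>x\<in>E. \<exists>a\<in>A. \<delta> a x \<le> \<epsilon> / (4 * L)"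
      unfolding S_def by auto
    have sub: "{\<eta>\<in>space P. F \<eta> \<ge> ennreal \<epsilon>} \<subseteq> (\<Union>a\<in>A. {\<eta>\<in>space P. \<epsilon>/2 \<le> g a \<eta>})"
    proof (rule subsetI, rule ccontr)
      fix \<eta> assume \<eta>: "\<eta> \<in> {\<eta>\<in>space P. F \<eta> \<ge> ennreal \<epsilon>}"
        and nin: "\<eta> \<notin> (\<Union>a\<in>A. {\<eta>\<in>space P. \<epsilon>/2 \<le> g a \<eta>})"
      have sp: "\<eta> \<in> space P" using \<eta> by auto
      have lt: "\<forall>a\<in>A. g a \<eta> < \<epsilon>/2" using nin sp by auto
      have Ane: "A \<noteq> {}" using A(4) nonempty by auto
      define m where "m = Max ((\<lambda>a. g a \<eta>) ` A)"
      have m_lt: "m < \<epsilon>/2" unfolding m_def using A(2) Ane lt by (subst Max_less_iff) auto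
      have m_ge: "g a \<eta> \<le> m" if "a \<in> A" for a unfolding m_def using A(2) that by simp
      have "F \<eta> \<le> ennreal (m + \<epsilon>/2)"
        unfolding F_def
      proof (rule SUP_least)
        fix x assume x: "x \<in> E"
        obtain a where a: "a \<in> A" "\<delta> a x \<le> \<epsilon> / (4 * L)" using A(4) x by auto
        have aE: "a \<in> E" using a A by auto
        have "g x \<eta> \<le> g a \<eta> + 2 * L * \<delta> x a" using glip[OF x aE sp] .
        also have "\<delta> x a = \<delta> a x" using MS.commute .
        also have "2 * L * \<delta> a x \<le> \<epsilon> / 2" using a(2) L_pos by (simp add: field_simps)
        finally have "g x \<eta> \<le> m + \<epsilon>/2" using m_ge[OF a(1)] by simp
        then show "ennreal (g x \<eta>) \<le> ennreal (m + \<epsilon>/2)" by (rule ennreal_leI)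
      qed
      also have "ennreal (m + \<epsilon>/2) < ennreal \<epsilon>"
      proof -
        obtain a0 where "a0 \<in> A" using Ane by auto
        then have "0 \<le> m" using m_ge[of a0] unfolding g_def by (meson abs_ge_zero order_trans)
        then show ?thesis using m_lt eps_pos by (subst ennreal_less_iff) auto
      qed
      finally show False using \<eta> by auto
    qed
    have evs: "{\<eta>\<in>space P. \<epsilon>/2 \<le> g a \<eta>} \<in> events" if "a \<in> A" for a
    proof -
      have [measurable]: "Z a \<in> borel_measurable P" using Zm that A(1) by auto
      show ?thesis unfolding g_def by measurable
    qed
    have "emeasure P {\<eta>\<in>space P. F \<eta> \<ge> ennreal \<epsilon>} \<le> emeasure P (\<Union>a\<in>A. {\<eta>\<in>space P. \<epsilon>/2 \<le> g a \<eta>})"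
      by (rule emeasure_mono[OF sub]) (use A evs in auto)
    also have "\<dots> \<le> (\<Sum>a\<in>A. emeasure P {\<eta>\<in>space P. \<epsilon>/2 \<le> g a \<eta>})"
      by (rule emeasure_subadditive_finite) (use A evs in auto)
    also have "\<dots> \<le> (\<Sum>a\<in>A. ennreal (2 * c))"
      by (rule sum_mono) (use A hoef in auto)
    also have "\<dots> = of_nat (card A) * ennreal (2 * c)" by simp
    also have "\<dots> \<le> of_nat n * ennreal (2 * c)"
      using A(3) by (intro mult_right_mono) auto
    also have "\<dots> = 2 * ennreal_of_enat (covering_number E \<delta> (\<epsilon> / (4 * L))) * ennreal c"
      using enat c_pos by (simp add: ennreal_mult mult_ac)
    finally show ?thesis .
  qed
  show ?thesis using part1 part2 part3 unfolding F_def g_def EZ_def c_def by simp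
qed

end
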